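(* With notation as in the context (type $E_6$ over $\mathbb{Z}/3$), $\Gamma_6^+=\{(x_1,\dots,x_5)\in V: \prod_{i=1}^5x_i=1\}$, i.e. $\Gamma_6^+$ is the set of vectors with all coordinates nonzero and an even number of coordinates equal to $2$.
   Context: Let $V=(\mathbb{Z}/3)^5$ with the standard symmetric form $\sum_i x_iy_i$. Let $\Delta$ be the root system of type $E_6$ with simple roots $\alpha_1,\dots,\alpha_6$, $\langle\alpha_i,\alpha_i\rangle=2$, $\langle\alpha_i,\alpha_j\rangle=-1$ if $\{i,j\}\in\{\{1,3\},\{3,4\},\{4,5\},\{5,6\},\{2,4\}\}$, $0$ otherwise; $\Lambda=\bigoplus\mathbb{Z}\alpha_i$. Let $f:\Lambda\to V$ be the group homomorphism with $f(\alpha_1)=(1,2,0,0,0)$, $f(\alpha_2)=(0,0,0,1,2)$, $f(\alpha_3)=(0,1,2,0,0)$, $f(\alpha_4)=(0,0,1,2,0)$, $f(\alpha_5)=(0,0,0,1,1)$, $f(\alpha_6)=(1,1,1,1,1)$. Let $\Delta_6^+$ be the positive roots $\beta=\sum\beta^i\alpha_i$ with $\beta^6\ne0$, and $\Gamma_6^+=f(\Delta_6^+)$. *)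

theory Defs
  imports Main "HOL-Library.Numeral_Type"
begin

text \<open>V = (Z/3)^5 is represented by functions nat => 3 supported on indices 1..5.
  The root lattice Lambda = direct sum of Z alpha_i is represented by coefficient
  functions nat => int supported on indices 1..6 (beta i = coefficient of alpha_i).\<close>

definition V5 :: "(nat \<Rightarrow> 3) set" where
  "V5 = {x. \<forall>i. i \<notin> {1..5} \<longrightarrow> x i = 0}"

definition LambdaE6 :: "(nat \<Rightarrow> int) set" where
  "LambdaE6 = {b. \<forall>i. i \<notin> {1..6} \<longrightarrow> b i = 0}"

definition gramE6 :: "nat \<Rightarrow> nat \<Rightarrow> int" where
  "gramE6 i j = (if i = j then 2
     else if {i, j} \<in> {{1,3},{3,4},{4,5},{5,6},{2,4}} then -1 else 0)"

definition formE6 :: "(nat \<Rightarrow> int) \<Rightarrow> (nat \<Rightarrow> int) \<Rightarrow> int" where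
  "formE6 b c = (\<Sum>i\<in>{1..6}. \<Sum>j\<in>{1..6}. b i * c j * gramE6 i j)"

text \<open>The roots of the simply-laced root system E6 are exactly the lattice vectors of
  norm 2; the positive roots are those with nonnegative coefficients.\<close>
definition rootsE6 :: "(nat \<Rightarrow> int) set" where
  "rootsE6 = {b \<in> LambdaE6. formE6 b b = 2}"

definition pos_rootsE6 :: "(nat \<Rightarrow> int) set" where
  "pos_rootsE6 = {b \<in> rootsE6. \<forall>i. b i \<ge> 0}"

definition Delta6_pos :: "(nat \<Rightarrow> int) set" where
  "Delta6_pos = {b \<in> pos_rootsE6. b 6 \<noteq> 0}"

definition vec5 :: "int list \<Rightarrow> nat \<Rightarrow> 3" where
  "vec5 xs = (\<lambda>i. if i \<in> {1..5} then of_int (xs ! (i - 1)) else 0)"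

definition f_alpha :: "nat \<Rightarrow> nat \<Rightarrow> 3" where
  "f_alpha i = (if i = 1 then vec5 [1,2,0,0,0]
     else if i = 2 then vec5 [0,0,0,1,2]
     else if i = 3 then vec5 [0,1,2,0,0]
     else if i = 4 then vec5 [0,0,1,2,0]
     else if i = 5 then vec5 [0,0,0,1,1]
     else if i = 6 then vec5 [1,1,1,1,1]
     else (\<lambda>_. 0))"

definition fE6 :: "(nat \<Rightarrow> int) \<Rightarrow> nat \<Rightarrow> 3" where
  "fE6 b = (\<lambda>k. \<Sum>i\<in>{1..6}. of_int (b i) * f_alpha i k)"

definition Gamma6_pos :: "(nat \<Rightarrow> 3) set" where
  "Gamma6_pos = fE6 ` Delta6_pos"

end

theory Submission imports Defs begin

definition QQ :: "int \<Rightarrow> int \<Rightarrow> int \<Rightarrow> int \<Rightarrow> int \<Rightarrow> int \<Rightarrow> int" where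
  "QQ a1 a2 a3 a4 a5 a6 = 2*(a1^2 + a2^2 + a3^2 + a4^2 + a5^2 + a6^2)
     - 2*(a1*a3 + a3*a4 + a4*a5 + a5*a6 + a2*a4)"

definition RR :: "(int \<times> int \<times> int \<times> int \<times> int \<times> int) set" where
  "RR = {(0, 0, 0, 0, 0, 1), (0, 0, 0, 0, 1, 1), (0, 0, 0, 1, 1, 1), (0, 0, 1, 1, 1, 1), (0, 1, 0, 1, 1, 1), (0, 1, 1, 1, 1, 1), (0, 1, 1, 2, 1, 1), (0, 1, 1, 2, 2, 1), (1, 0, 1, 1, 1, 1), (1, 1, 1, 1, 1, 1), (1, 1, 1, 2, 1, 1), (1, 1, 1, 2, 2, 1), (1, 1, 2, 2, 1, 1), (1, 1, 2, 2, 2, 1), (1, 1, 2, 3, 2, 1), (1, 2, 2, 3, 2, 1)}"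

definition EE :: "(3 \<times> 3 \<times> 3 \<times> 3 \<times> 3) set" where
  "EE = {(1, 1, 1, 1, 1), (1, 1, 1, 2, 2), (1, 1, 2, 1, 2), (1, 2, 1, 1, 2), (1, 1, 2, 2, 1), (1, 2, 1, 2, 1), (1, 2, 2, 1, 1), (1, 2, 2, 2, 2), (2, 1, 1, 1, 2), (2, 1, 1, 2, 1), (2, 1, 2, 1, 1), (2, 1, 2, 2, 2), (2, 2, 1, 1, 1), (2, 2, 1, 2, 2), (2, 2, 2, 1, 2), (2, 2, 2, 2, 1)}"

lemma form_eq: "formE6 b b = QQ (b 1) (b 2) (b 3) (b 4) (b 5) (b 6)"
proof -
  have s: "{1..6::nat} = {1,2,3,4,5,6}" by auto
  show ?thesis unfolding formE6_def s QQ_def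
    by (simp add: gramE6_def doubleton_eq_iff algebra_simps power2_eq_square)
qed

lemma sqb: fixes x :: int assumes "0 \<le> x" "k * x^2 \<le> C" "k > 0" "k * (m+1)^2 > C" "m \<ge> 0"
  shows "x \<le> m"
proof (rule ccontr)
  assume "\<not> x \<le> m"
  hence "m + 1 \<le> x" by simp
  hence "(m+1)^2 \<le> x^2" using assms(5) by (intro power_mono) auto
  hence "k*(m+1)^2 \<le> k*x^2" using assms(3) by (intro mult_left_mono) auto
  thus False using assms by linarith
qed

lemma bounds:
  fixes a1 a2 a3 a4 a5 a6 :: int
  assumes "QQ a1 a2 a3 a4 a5 a6 = 2" "0 \<le> a1" "0 \<le> a2" "0 \<le> a3" "0 \<le> a4" "0 \<le> a5" "0 \<le> a6"
  shows "a1 \<le> 1 \<and> a2 \<le> 2 \<and> a3 \<le> 2 \<and> a4 \<le> 3 \<and> a5 \<le> 2 \<and> a6 \<le> 1"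
proof -
  let ?Q = "QQ a1 a2 a3 a4 a5 a6"
  have e1: "4*?Q = 2*(2*a2 + -1*a4)^2 + 2*(2*a3 + -1*a4 + -1*a1)^2 + 1*(2*a4 + -2*a5 + -1*a1)^2 + 1*(2*a5 + -2*a6 + -1*a1)^2 + 1*(2*a6 + -1*a1)^2 + 3*(a1)^2"
    unfolding QQ_def by algebra
  have e2: "60*?Q = 30*(2*a1 + -1*a3)^2 + 10*(3*a3 + -2*a4)^2 + 5*(4*a4 + -3*a5 + -3*a2)^2 + 3*(5*a5 + -4*a6 + -3*a2)^2 + 18*(2*a6 + -1*a2)^2 + 30*(a2)^2"
    unfolding QQ_def by algebra
  have e3: "60*?Q = 30*(2*a1 + -1*a3)^2 + 30*(2*a2 + -1*a4)^2 + 10*(3*a4 + -2*a5 + -2*a3)^2 + 5*(4*a5 + -3*a6 + -2*a3)^2 + 3*(5*a6 + -2*a3)^2 + 18*(a3)^2"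
    unfolding QQ_def by algebra
  have e4: "6*?Q = 3*(2*a1 + -1*a3)^2 + 3*(2*a2 + -1*a4)^2 + 1*(3*a3 + -2*a4)^2 + 3*(2*a5 + -1*a6 + -1*a4)^2 + 1*(3*a6 + -1*a4)^2 + 1*(a4)^2"
    unfolding QQ_def by algebra
  have e5: "30*?Q = 15*(2*a1 + -1*a3)^2 + 15*(2*a2 + -1*a4)^2 + 5*(3*a3 + -2*a4)^2 + 1*(5*a4 + -6*a5)^2 + 15*(2*a6 + -1*a5)^2 + 9*(a5)^2"
    unfolding QQ_def by algebra
  have e6: "60*?Q = 30*(2*a1 + -1*a3)^2 + 30*(2*a2 + -1*a4)^2 + 10*(3*a3 + -2*a4)^2 + 2*(5*a4 + -6*a5)^2 + 3*(4*a5 + -5*a6)^2 + 45*(a6)^2"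
    unfolding QQ_def by algebra
  have "3*a1^2 \<le> 8" using e1 assms(1) by (smt (verit) zero_le_power2)
  hence b1: "a1 \<le> 1" using sqb[of a1 3 8 1] assms by simp
  have "30*a2^2 \<le> 120" using e2 assms(1) by (smt (verit) zero_le_power2)
  hence b2: "a2 \<le> 2" using sqb[of a2 30 120 2] assms by simp
  have "18*a3^2 \<le> 120" using e3 assms(1) by (smt (verit) zero_le_power2)
  hence b3: "a3 \<le> 2" using sqb[of a3 18 120 2] assms by simp
  have "1*a4^2 \<le> 12" using e4 assms(1) by (smt (verit) zero_le_power2)
  hence b4: "a4 \<le> 3" using sqb[of a4 1 12 3] assms by simp
  have "9*a5^2 \<le> 60" using e5 assms(1) by (smt (verit) zero_le_power2)
  hence b5: "a5 \<le> 2" using sqb[of a5 9 60 2] assms by simp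
  have "45*a6^2 \<le> 120" using e6 assms(1) by (smt (verit) zero_le_power2)
  hence b6: "a6 \<le> 1" using sqb[of a6 45 120 1] assms by simp
  show ?thesis using b1 b2 b3 b4 b5 b6 by simp
qed

lemma enum:
  fixes a1 a2 a3 a4 a5 a6 :: int
  assumes "QQ a1 a2 a3 a4 a5 a6 = 2" "0 \<le> a1" "0 \<le> a2" "0 \<le> a3" "0 \<le> a4" "0 \<le> a5" "0 \<le> a6" "a6 \<noteq> 0"
  shows "(a1, a2, a3, a4, a5, a6) \<in> RR"
proof -
  note b = bounds[OF assms(1-7)]
  have "a6 = 1" using b assms by simp
  moreover have "a1 = 0 \<or> a1 = 1" using b assms by auto
  moreover have "a2 = 0 \<or> a2 = 1 \<or> a2 = 2" using b assms by auto
  moreover have "a3 = 0 \<or> a3 = 1 \<or> a3 = 2" using b assms by auto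
  moreover have "a4 = 0 \<or> a4 = 1 \<or> a4 = 2 \<or> a4 = 3" using b assms by auto
  moreover have "a5 = 0 \<or> a5 = 1 \<or> a5 = 2" using b assms by auto
  ultimately show ?thesis using assms(1) unfolding RR_def QQ_def
    by (elim disjE; simp)
qed


lemma RR_Q: "(a1, a2, a3, a4, a5, a6) \<in> RR \<Longrightarrow> QQ a1 a2 a3 a4 a5 a6 = 2 \<and> 0 \<le> a1 \<and> 0 \<le> a2 \<and> 0 \<le> a3 \<and> 0 \<le> a4 \<and> 0 \<le> a5 \<and> 0 \<le> a6 \<and> a6 \<noteq> 0"
  unfolding RR_def QQ_def by auto

lemma Delta_char: "b \<in> Delta6_pos \<longleftrightarrow> b \<in> LambdaE6 \<and> (b 1, b 2, b 3, b 4, b 5, b 6) \<in> RR"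
proof
  assume "b \<in> Delta6_pos"
  hence L: "b \<in> LambdaE6" and "formE6 b b = 2" and nn: "\<forall>i. b i \<ge> 0" and "b 6 \<noteq> 0"
    unfolding Delta6_pos_def pos_rootsE6_def rootsE6_def by auto
  thus "b \<in> LambdaE6 \<and> (b 1, b 2, b 3, b 4, b 5, b 6) \<in> RR"
    using enum[of "b 1" "b 2" "b 3" "b 4" "b 5" "b 6"] form_eq[of b] by auto
next
  assume a: "b \<in> LambdaE6 \<and> (b 1, b 2, b 3, b 4, b 5, b 6) \<in> RR"
  note q = RR_Q[OF a[THEN conjunct2]]
  have "\<forall>i. b i \<ge> 0"
  proof
    fix i
    show "b i \<ge> 0"
    proof (cases "i \<in> {1..6}")
      case True
      hence "i = 1 \<or> i = 2 \<or> i = 3 \<or> i = 4 \<or> i = 5 \<or> i = 6" by auto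
      thus ?thesis using q by auto
    next
      case False
      thus ?thesis using a unfolding LambdaE6_def by auto
    qed
  qed
  thus "b \<in> Delta6_pos" using a q form_eq[of b]
    unfolding Delta6_pos_def pos_rootsE6_def rootsE6_def by auto
qed

definition tup :: "(nat \<Rightarrow> 3) \<Rightarrow> 3 \<times> 3 \<times> 3 \<times> 3 \<times> 3" where
  "tup x = (x 1, x 2, x 3, x 4, x 5)"

definition hh :: "int \<times> int \<times> int \<times> int \<times> int \<times> int \<Rightarrow> 3 \<times> 3 \<times> 3 \<times> 3 \<times> 3" where
  "hh r = (case r of (a1, a2, a3, a4, a5, a6) \<Rightarrow>
     (of_int (a1 + a6), of_int (2*a1 + a3 + a6), of_int (2*a3 + a4 + a6),
      of_int (a2 + 2*a4 + a5 + a6), of_int (2*a2 + a5 + a6)))"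

lemma fE6_out: "k \<notin> {1..5} \<Longrightarrow> fE6 b k = 0"
  unfolding fE6_def by (rule sum.neutral) (auto simp: f_alpha_def vec5_def)

lemma fE6_V5: "fE6 b \<in> V5"
  unfolding V5_def using fE6_out by auto

lemma tup_fE6: "tup (fE6 b) = hh (b 1, b 2, b 3, b 4, b 5, b 6)"
proof -
  have s: "{1..6::nat} = {1,2,3,4,5,6}" by auto
  show ?thesis unfolding tup_def hh_def fE6_def s f_alpha_def vec5_def
    by (simp add: algebra_simps)
qed

lemma V5_eq: "x \<in> V5 \<Longrightarrow> y \<in> V5 \<Longrightarrow> tup x = tup y \<Longrightarrow> x = y"
proof
  fix k assume a: "x \<in> V5" "y \<in> V5" "tup x = tup y"
  show "x k = y k"
  proof (cases "k \<in> {1..5}")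
    case True
    hence "k = 1 \<or> k = 2 \<or> k = 3 \<or> k = 4 \<or> k = 5" by auto
    thus ?thesis using a(3) unfolding tup_def by auto
  next
    case False
    thus ?thesis using a(1,2) unfolding V5_def by auto
  qed
qed

definition mk :: "int \<times> int \<times> int \<times> int \<times> int \<times> int \<Rightarrow> nat \<Rightarrow> int" where
  "mk r = (case r of (a1, a2, a3, a4, a5, a6) \<Rightarrow>
     (\<lambda>i. if i = 1 then a1 else if i = 2 then a2 else if i = 3 then a3 else if i = 4 then a4
       else if i = 5 then a5 else if i = 6 then a6 else 0))"

lemma mk_props: "mk r \<in> LambdaE6 \<and> (mk r 1, mk r 2, mk r 3, mk r 4, mk r 5, mk r 6) = r"
  unfolding mk_def LambdaE6_def by (cases r) auto

lemma tup_Gamma: "tup ` Gamma6_pos = hh ` RR"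
proof
  show "tup ` Gamma6_pos \<subseteq> hh ` RR"
    unfolding Gamma6_pos_def using Delta_char tup_fE6 by auto
next
  show "hh ` RR \<subseteq> tup ` Gamma6_pos"
  proof
    fix t assume "t \<in> hh ` RR"
    then obtain r where r: "r \<in> RR" "t = hh r" by auto
    have "mk r \<in> Delta6_pos" using Delta_char mk_props[of r] r(1) by simp
    moreover have "tup (fE6 (mk r)) = t" using tup_fE6[of "mk r"] mk_props[of r] r(2) by simp
    ultimately show "t \<in> tup ` Gamma6_pos" unfolding Gamma6_pos_def by force
  qed
qed

lemma n3: 
  "(3::3) = 0"
  "(4::3) = 1"
  "(5::3) = 2"
  "(6::3) = 0"
  "(7::3) = 1"
  "(8::3) = 2"
  "(9::3) = 0"
  "(10::3) = 1"
  "(11::3) = 2"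
  "(12::3) = 0"
  by simp_all

lemma hhRR: "hh ` RR = EE"
  unfolding RR_def EE_def hh_def by (simp add: n3)

lemma Gamma_sub: "Gamma6_pos \<subseteq> V5"
  unfolding Gamma6_pos_def using fE6_V5 by auto

lemma Gamma_char:
  assumes "\<And>x. x \<in> V5 \<Longrightarrow> P x \<longleftrightarrow> tup x \<in> EE"
  shows "Gamma6_pos = {x \<in> V5. P x}"
proof
  show "Gamma6_pos \<subseteq> {x \<in> V5. P x}"
    using Gamma_sub assms tup_Gamma hhRR by auto
next
  show "{x \<in> V5. P x} \<subseteq> Gamma6_pos"
  proof
    fix x assume "x \<in> {x \<in> V5. P x}"
    hence x: "x \<in> V5" "tup x \<in> EE" using assms by auto
    then obtain y where "y \<in> Gamma6_pos" "tup y = tup x" using tup_Gamma hhRR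
      by (metis imageE)
    thus "x \<in> Gamma6_pos" using V5_eq[of x y] x Gamma_sub by auto
  qed
qed

lemma ex3: "(x::3) = 0 \<or> x = 1 \<or> x = 2"
proof (cases x)
  case (of_int z)
  then have "z = 0 \<or> z = 1 \<or> z = 2" by auto
  then show ?thesis using of_int by auto
qed

lemma EE1: "(a::3) * b * c * d * e = 1 \<longleftrightarrow> (a, b, c, d, e) \<in> EE"
  using ex3[of a] ex3[of b] ex3[of c] ex3[of d] ex3[of e]
  unfolding EE_def by (elim disjE; simp)


lemma EE2: "((a::3) \<noteq> 0 \<and> b \<noteq> 0 \<and> c \<noteq> 0 \<and> d \<noteq> 0 \<and> e \<noteq> 0 \<and>
    even ((if a = 2 then 1 else 0) + (if b = 2 then 1 else 0) + (if c = 2 then 1 else 0)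
      + (if d = 2 then 1 else 0) + (if e = 2 then (1::nat) else 0)))
   \<longleftrightarrow> (a, b, c, d, e) \<in> EE"
  using ex3[of a] ex3[of b] ex3[of c] ex3[of d] ex3[of e]
  unfolding EE_def by (elim disjE; simp)

lemma card5: "card {i\<in>{1..5::nat}. P i} = (if P 1 then 1 else 0) + (if P 2 then 1 else 0)
   + (if P 3 then 1 else 0) + (if P 4 then 1 else 0) + (if P 5 then 1 else 0)"
proof -
  have s: "{1..5::nat} = {1,2,3,4,5}" by auto
  have "card {i\<in>{1..5::nat}. P i} = (\<Sum>i\<in>{1..5::nat}. if P i then 1 else 0)"
    unfolding card_eq_sum by (rule sum.inter_filter) simp
  also have "\<dots> = (if P 1 then 1 else 0) + (if P 2 then 1 else 0)
   + (if P 3 then 1 else 0) + (if P 4 then 1 else 0) + (if P 5 then 1 else 0)"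
    unfolding s by simp
  finally show ?thesis .
qed

theorem mainTheorem15:
  shows "Gamma6_pos = {x \<in> V5. (\<Prod>i\<in>{1..5}. x i) = 1}
       \<and> Gamma6_pos = {x \<in> V5. (\<forall>i\<in>{1..5}. x i \<noteq> 0) \<and> even (card {i\<in>{1..5}. x i = 2})}"
proof
  have s: "{1..5::nat} = {1,2,3,4,5}" by auto
  show "Gamma6_pos = {x \<in> V5. (\<Prod>i\<in>{1..5}. x i) = 1}"
  proof (rule Gamma_char)
    fix x :: "nat \<Rightarrow> 3"
    have "(\<Prod>i\<in>{1..5}. x i) = x 1 * x 2 * x 3 * x 4 * x 5" unfolding s by (simp add: mult.assoc)
    thus "((\<Prod>i\<in>{1..5}. x i) = 1) \<longleftrightarrow> tup x \<in> EE" using EE1 unfolding tup_def by simp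
  qed
  show "Gamma6_pos = {x \<in> V5. (\<forall>i\<in>{1..5}. x i \<noteq> 0) \<and> even (card {i\<in>{1..5}. x i = 2})}"
  proof (rule Gamma_char)
    fix x :: "nat \<Rightarrow> 3"
    have "(\<forall>i\<in>{1..5::nat}. x i \<noteq> 0) \<longleftrightarrow> x 1 \<noteq> 0 \<and> x 2 \<noteq> 0 \<and> x 3 \<noteq> 0 \<and> x 4 \<noteq> 0 \<and> x 5 \<noteq> 0"
      unfolding s by simp
    thus "((\<forall>i\<in>{1..5}. x i \<noteq> 0) \<and> even (card {i\<in>{1..5}. x i = 2})) \<longleftrightarrow> tup x \<in> EE"
      using EE2[of "x 1" "x 2" "x 3" "x 4" "x 5"] card5[of "\<lambda>i. x i = 2"] unfolding tup_def
      by simp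
  qed
qed

end
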